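(* Let $n\ge 2$ and $q=e^{2\pi i/6}$. For each $i$, conjugation by $s_i$ maps the set $\{\pm w\}$ of signed basis words of $Q_n$ to itself, i.e. $x\mapsto s_i^{-1}xs_i$ acts on the basis $\{u_1^{\epsilon_1}\cdots u_{n-1}^{\epsilon_{n-1}}v_1^{\nu_1}\cdots v_{n-1}^{\nu_{n-1}}\}$ of $Q_n$ by a signed permutation. Consequently, the image of the group $G_n=\langle s_1,\dots,s_{n-1}\rangle$ in the automorphism group of $Q_n$ under the conjugation action is finite, and the kernel of this action is contained in $Z(Q_n)$.
   Context: $Q_n$ is the $\mathbb{C}$-algebra with generators $u_1,v_1,\dots,u_{n-1},v_{n-1}$ and relations (G1) $u_i^2=v_i^2=-1$; (G2) $[u_i,v_j]=-1$ if $|i-j|\le1$; (G3) $[u_i,v_j]=1$ if $|i-j|\ge2$; (G4) $[u_i,u_j]=[v_i,v_j]=1$, with $[a,b]=aba^{-1}b^{-1}$. The words $u_1^{\epsilon_1}\cdots u_{n-1}^{\epsilon_{n-1}}v_1^{\nu_1}\cdots v_{n-1}^{\nu_{n-1}}$ ($\epsilon_i,\nu_i\in\{0,1\}$) form a basis of $Q_n$. $s_i=\frac{-1}{2q}(1+u_i+v_i+u_iv_i)$ for $1\le i\le n-1$ (these are invertible). *)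

theory Defs
  imports Complex_Main
begin

text \<open>Two-sided inverse in a ring (used only for invertible elements).\<close>
definition ring_inv :: "'a::ring_1 \<Rightarrow> 'a" where
  "ring_inv a = (THE b. b * a = 1 \<and> a * b = 1)"

definition comm :: "'a::ring_1 \<Rightarrow> 'a \<Rightarrow> 'a" where
  "comm a b = a * b * ring_inv a * ring_inv b"

text \<open>A complex algebra structure on a ring: a central unital ring homomorphism from C.\<close>
definition calg :: "(complex \<Rightarrow> 'a::ring_1) \<Rightarrow> bool" where
  "calg sc \<longleftrightarrow> sc 1 = 1 \<and> (\<forall>a b. sc (a + b) = sc a + sc b) \<and> (\<forall>a b. sc (a * b) = sc a * sc b)
     \<and> (\<forall>a x. sc a * x = x * sc a)"

text \<open>Basis word u_1^{e_1}...u_{n-1}^{e_{n-1}} v_1^{f_1}...v_{n-1}^{f_{n-1}}, with S = {i. e_i = 1},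
  T = {i. f_i = 1}, subsets of {1..n-1}; products are ordered by increasing index.\<close>
definition word :: "nat \<Rightarrow> (nat \<Rightarrow> 'a::ring_1) \<Rightarrow> (nat \<Rightarrow> 'a) \<Rightarrow> nat set \<Rightarrow> nat set \<Rightarrow> 'a" where
  "word n u v S T = prod_list (map (\<lambda>i. if i \<in> S then u i else 1) [1..<n])
                  * prod_list (map (\<lambda>i. if i \<in> T then v i else 1) [1..<n])"

definition word_idx :: "nat \<Rightarrow> (nat set \<times> nat set) set" where
  "word_idx n = Pow {1..<n} \<times> Pow {1..<n}"

definition words_basis :: "nat \<Rightarrow> (complex \<Rightarrow> 'a::ring_1) \<Rightarrow> (nat \<Rightarrow> 'a) \<Rightarrow> (nat \<Rightarrow> 'a) \<Rightarrow> bool" where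
  "words_basis n sc u v \<longleftrightarrow>
     (\<forall>x. \<exists>c. x = (\<Sum>(S,T)\<in>word_idx n. sc (c (S,T)) * word n u v S T)) \<and>
     (\<forall>c. (\<Sum>(S,T)\<in>word_idx n. sc (c (S,T)) * word n u v S T) = 0 \<longrightarrow>
          (\<forall>p\<in>word_idx n. c p = 0))"

definition Q_rels :: "nat \<Rightarrow> (nat \<Rightarrow> 'a::ring_1) \<Rightarrow> (nat \<Rightarrow> 'a) \<Rightarrow> bool" where
  "Q_rels n u v \<longleftrightarrow>
     (\<forall>i\<in>{1..<n}. u i * u i = -1 \<and> v i * v i = -1) \<and>
     (\<forall>i\<in>{1..<n}. \<forall>j\<in>{1..<n}. i \<le> j + 1 \<and> j \<le> i + 1 \<longrightarrow> comm (u i) (v j) = -1) \<and>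
     (\<forall>i\<in>{1..<n}. \<forall>j\<in>{1..<n}. (i \<ge> j + 2 \<or> j \<ge> i + 2) \<longrightarrow> comm (u i) (v j) = 1) \<and>
     (\<forall>i\<in>{1..<n}. \<forall>j\<in>{1..<n}. comm (u i) (u j) = 1 \<and> comm (v i) (v j) = 1)"

definition is_Q :: "nat \<Rightarrow> (complex \<Rightarrow> 'a::ring_1) \<Rightarrow> (nat \<Rightarrow> 'a) \<Rightarrow> (nat \<Rightarrow> 'a) \<Rightarrow> bool" where
  "is_Q n sc u v \<longleftrightarrow> calg sc \<and> Q_rels n u v \<and> words_basis n sc u v"

definition qq :: complex where "qq = exp (2 * of_real pi * \<i> / 6)"

definition sgen :: "(complex \<Rightarrow> 'a::ring_1) \<Rightarrow> (nat \<Rightarrow> 'a) \<Rightarrow> (nat \<Rightarrow> 'a) \<Rightarrow> nat \<Rightarrow> 'a" where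
  "sgen sc u v i = sc (- 1 / (2 * qq)) * (1 + u i + v i + u i * v i)"

definition signed_words :: "nat \<Rightarrow> (nat \<Rightarrow> 'a::ring_1) \<Rightarrow> (nat \<Rightarrow> 'a) \<Rightarrow> 'a set" where
  "signed_words n u v = {w. \<exists>(S,T)\<in>word_idx n. w = word n u v S T \<or> w = - word n u v S T}"

inductive_set Ggrp :: "nat \<Rightarrow> (nat \<Rightarrow> 'a::ring_1) \<Rightarrow> 'a set" for n s where
  one: "1 \<in> Ggrp n s"
| mul: "g \<in> Ggrp n s \<Longrightarrow> i \<in> {1..<n} \<Longrightarrow> g * s i \<in> Ggrp n s"
| mulinv: "g \<in> Ggrp n s \<Longrightarrow> i \<in> {1..<n} \<Longrightarrow> g * ring_inv (s i) \<in> Ggrp n s"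

definition conj_act :: "'a::ring_1 \<Rightarrow> 'a \<Rightarrow> 'a" where
  "conj_act g x = ring_inv g * x * g"

end

theory Submission imports Defs begin

lemma inv_unique: fixes a b :: "'a::ring_1" assumes "b*a = 1" "a*b = 1" shows "ring_inv a = b"
  unfolding ring_inv_def
proof (rule the_equality)
  show "b*a = 1 \<and> a*b = 1" using assms by simp
  fix b' assume h: "b'*a = 1 \<and> a*b' = 1"
  have "b' = b'*(a*b)" using assms by simp
  also have "\<dots> = (b'*a)*b" by (simp add: mult.assoc)
  also have "\<dots> = b" using h by simp
  finally show "b' = b" .
qed

lemma comm_rel: fixes a b :: "'a::ring_1" assumes aa: "a*a = -1" and bb: "b*b = -1"
  shows "b*a = a * comm a b * b"
proof -
  have ia: "ring_inv a = -a" by (rule inv_unique) (simp_all add: aa)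
  have ib: "ring_inv b = -b" by (rule inv_unique) (simp_all add: bb)
  have a: "\<And>y. b*(b*y) = -y" "\<And>y. a*(a*y) = -y"
    using aa bb by (metis mult.assoc mult_minus1)+
  show ?thesis unfolding comm_def ia ib by (simp add: mult.assoc a bb)
qed

lemma anti_of_comm: fixes a b :: "'a::ring_1" assumes "a*a = -1" "b*b = -1" "comm a b = -1"
  shows "b*a = -(a*b)" using comm_rel[OF assms(1,2)] assms(3) by simp
lemma commute_of_comm: fixes a b :: "'a::ring_1" assumes "a*a = -1" "b*b = -1" "comm a b = 1"
  shows "b*a = a*b" using comm_rel[OF assms(1,2)] assms(3) by simp

definition P :: "(nat \<Rightarrow> 'a::ring_1) \<Rightarrow> nat set \<Rightarrow> nat list \<Rightarrow> 'a" where
  "P f S xs = prod_list (map (\<lambda>i. if i \<in> S then f i else 1) xs)"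

lemma P_simps[simp]: "P f S [] = 1" "P f S (k#ks) = (if k \<in> S then f k else 1) * P f S ks"
  by (simp_all add: P_def)

lemma P_cong: "(\<And>i. i \<in> set xs \<Longrightarrow> i \<in> S \<longleftrightarrow> i \<in> S') \<Longrightarrow> P f S xs = P f S' xs"
  by (induction xs) auto

lemma P_mul:
  fixes f :: "nat \<Rightarrow> 'a::ring_1"
  assumes "distinct xs" "set xs \<subseteq> I" "j \<in> set xs" "\<And>k. k \<in> I \<Longrightarrow> f j * f k = f k * f j"
    "f j * f j = -1"
  shows "f j * P f S xs = (if j \<in> S then - P f (S - {j}) xs else P f (insert j S) xs)"
  using assms(1-3)
proof (induction xs)
  case Nil then show ?case by simp
next
  case (Cons k ks)
  show ?case
  proof (cases "k = j")
    case True
    hence nj: "j \<notin> set ks" using Cons by auto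
    have c1: "P f (S - {j}) ks = P f S ks" "P f (insert j S) ks = P f S ks"
      by (rule P_cong, use nj in auto)+
    show ?thesis using True c1 assms(5) by (simp add: mult.assoc[symmetric])
  next
    case False
    hence jks: "j \<in> set ks" using Cons by auto
    have IH: "f j * P f S ks = (if j \<in> S then - P f (S - {j}) ks else P f (insert j S) ks)"
      using Cons jks by auto
    have cm: "f j * (if k \<in> S then f k else 1) = (if k \<in> S then f k else 1) * f j"
      using assms(4)[of k] Cons by auto
    have "f j * P f S (k#ks) = (if k \<in> S then f k else 1) * (f j * P f S ks)"
      by (simp only: P_simps mult.assoc[symmetric] cm)
    then show ?thesis using IH False by auto
  qed
qed

lemma P_comm:
  fixes f :: "nat \<Rightarrow> 'a::ring_1"
  assumes "\<And>k. k \<in> set xs \<Longrightarrow> x * f k = f k * x \<or> x * f k = -(f k * x)"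
  shows "x * P f S xs = P f S xs * x \<or> x * P f S xs = -(P f S xs * x)"
  using assms
proof (induction xs)
  case Nil then show ?case by simp
next
  case (Cons k ks)
  have IH: "x * P f S ks = P f S ks * x \<or> x * P f S ks = -(P f S ks * x)" using Cons by auto
  have h: "x * (if k \<in> S then f k else 1) = (if k \<in> S then f k else 1) * x
     \<or> x * (if k \<in> S then f k else 1) = -((if k \<in> S then f k else 1) * x)"
    using Cons.prems[of k] by auto
  define g where "g = (if k \<in> S then f k else 1)"
  have "x * (g * P f S ks) = (x * g) * P f S ks" by (simp add: mult.assoc)
  from h IH show ?case unfolding g_def[symmetric] P_simps
    by (elim disjE) (simp_all add: mult.assoc[symmetric], simp_all add: mult.assoc)
qed

lemma quat_A:
 fixes u v x :: "'a::ring_1"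
 assumes uu: "u*u = -1" and vv: "v*v=-1" and vu: "v*u = -(u*v)" and xu: "x*u = u*x" and xv: "x*v = -(v*x)"
 shows "x*(1+u+v+u*v) = (1+u+v+u*v)*(-(v*x))"
proof -
  have a: "\<And>y. x*(u*y) = u*(x*y)" "\<And>y. x*(v*y) = -(v*(x*y))" "\<And>y. v*(v*y) = -y"
    using xu xv vv by (metis mult.assoc mult_minus_left mult_1 mult_minus1)+
  show ?thesis by (simp add: algebra_simps a xu xv vv)
qed
lemma quat_B:
 fixes u v x :: "'a::ring_1"
 assumes uu: "u*u = -1" and vv: "v*v=-1" and vu: "v*u = -(u*v)" and xu: "x*u = -(u*x)" and xv: "x*v = v*x"
 shows "x*(1+u+v+u*v) = (1+u+v+u*v)*(-(u*(v*x)))"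
proof -
  have a: "\<And>y. x*(u*y) = -(u*(x*y))" "\<And>y. x*(v*y) = v*(x*y)" "\<And>y. v*(v*y) = -y"
     "\<And>y. u*(u*y) = -y" "\<And>y. v*(u*y) = -(u*(v*y))"
    using xu xv vv uu vu by (metis mult.assoc mult_minus_left mult_1 mult_minus1)+
  show ?thesis by (simp add: algebra_simps a xu xv vv uu vu)
qed
lemma quat_inv:
 fixes u v :: "'a::ring_1"
 assumes uu: "u*u = -1" and vv: "v*v=-1" and vu: "v*u = -(u*v)"
 shows "(1+u+v+u*v)*(1-u-v-u*v) = 4" "(1-u-v-u*v)*(1+u+v+u*v) = 4"
proof -
  have a: "\<And>y. v*(v*y) = -y"
     "\<And>y. u*(u*y) = -y" "\<And>y. v*(u*y) = -(u*(v*y))"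
    using vv uu vu by (metis mult.assoc mult_minus_left mult_1 mult_minus1)+
  show "(1+u+v+u*v)*(1-u-v-u*v) = 4" by (simp add: algebra_simps a vv uu vu)
  show "(1-u-v-u*v)*(1+u+v+u*v) = 4" by (simp add: algebra_simps a vv uu vu)
qed

locale Qloc =
  fixes n :: nat and sc :: "complex \<Rightarrow> 'a::ring_1" and u v :: "nat \<Rightarrow> 'a"
  assumes calg: "calg sc" and rels: "Q_rels n u v"
begin

abbreviation "M \<equiv> signed_words n u v"
abbreviation "N \<equiv> {1..<n}"

lemma uu: "i \<in> N \<Longrightarrow> u i * u i = -1" and vv: "i \<in> N \<Longrightarrow> v i * v i = -1"
  using rels unfolding Q_rels_def by auto

lemma ucomm: "i \<in> N \<Longrightarrow> j \<in> N \<Longrightarrow> u j * u i = u i * u j"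
  using rels uu vv commute_of_comm unfolding Q_rels_def by metis
lemma vcomm: "i \<in> N \<Longrightarrow> j \<in> N \<Longrightarrow> v j * v i = v i * v j"
  using rels uu vv commute_of_comm unfolding Q_rels_def by metis
lemma vu_anti: "i \<in> N \<Longrightarrow> j \<in> N \<Longrightarrow> i \<le> j + 1 \<Longrightarrow> j \<le> i + 1 \<Longrightarrow> v j * u i = -(u i * v j)"
  using rels uu vv anti_of_comm unfolding Q_rels_def by metis
lemma vu_far: "i \<in> N \<Longrightarrow> j \<in> N \<Longrightarrow> \<not>(i \<le> j + 1 \<and> j \<le> i + 1) \<Longrightarrow> v j * u i = u i * v j"
proof -
  assume a: "i \<in> N" "j \<in> N" "\<not>(i \<le> j + 1 \<and> j \<le> i + 1)"
  hence "i \<ge> j + 2 \<or> j \<ge> i + 2" by auto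
  hence "comm (u i) (v j) = 1" using rels a unfolding Q_rels_def by blast
  thus ?thesis using commute_of_comm uu vv a by metis
qed
lemma vu_pm: "i \<in> N \<Longrightarrow> j \<in> N \<Longrightarrow> v j * u i = u i * v j \<or> v j * u i = -(u i * v j)"
  using vu_far vu_anti by blast

lemma word_P: "word n u v S T = P u S [1..<n] * P v T [1..<n]"
  by (simp add: word_def P_def)

lemma mem_M: "m \<in> M \<longleftrightarrow> (\<exists>S T. S \<subseteq> N \<and> T \<subseteq> N \<and> (m = word n u v S T \<or> m = - word n u v S T))"
  unfolding signed_words_def word_idx_def by auto

lemma word_in: "S \<subseteq> N \<Longrightarrow> T \<subseteq> N \<Longrightarrow> word n u v S T \<in> M" by (auto simp: mem_M)
lemma nword_in: "S \<subseteq> N \<Longrightarrow> T \<subseteq> N \<Longrightarrow> - word n u v S T \<in> M" by (auto simp: mem_M)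
lemma neg_in: assumes "m \<in> M" shows "-m \<in> M"
proof -
  obtain S T where ST: "S \<subseteq> N" "T \<subseteq> N" "m = word n u v S T \<or> m = - word n u v S T"
    using assms unfolding mem_M by blast
  then show ?thesis using word_in nword_in by auto
qed
lemma P_empty: "P f {} xs = 1" by (induction xs) auto
lemma one_in: "1 \<in> M"
proof -
  have "word n u v {} {} = 1" by (simp add: word_P P_empty)
  thus ?thesis using word_in[of "{}" "{}"] by simp
qed
lemma finite_M: "finite M"
proof -
  have "M \<subseteq> (\<lambda>(S,T). word n u v S T) ` word_idx n \<union> (\<lambda>(S,T). - word n u v S T) ` word_idx n"
    unfolding signed_words_def by auto
  moreover have "finite (word_idx n)" by (simp add: word_idx_def)
  ultimately show ?thesis by (meson finite_UnI finite_imageI finite_subset)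
qed

lemma Lmul_word:
  assumes j: "j \<in> N" and S: "S \<subseteq> N" and T: "T \<subseteq> N"
  shows "u j * word n u v S T \<in> M" "v j * word n u v S T \<in> M"
proof -
  have d: "distinct [1..<n]" "set [1..<n] \<subseteq> N" "j \<in> set [1..<n]" using j by auto
  have Pu: "u j * P u S [1..<n] = (if j \<in> S then - P u (S - {j}) [1..<n] else P u (insert j S) [1..<n])"
    by (rule P_mul[OF d]) (use ucomm uu j in auto)
  have Pv: "v j * P v T [1..<n] = (if j \<in> T then - P v (T - {j}) [1..<n] else P v (insert j T) [1..<n])"
    by (rule P_mul[OF d]) (use vcomm vv j in auto)
  have S': "S - {j} \<subseteq> N" "insert j S \<subseteq> N" and T': "T - {j} \<subseteq> N" "insert j T \<subseteq> N"
    using S T j by auto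
  have "u j * word n u v S T = (u j * P u S [1..<n]) * P v T [1..<n]"
    by (simp add: word_P mult.assoc)
  then show "u j * word n u v S T \<in> M" unfolding Pu
    using word_in[OF S'(1) T] nword_in[OF S'(1) T] word_in[OF S'(2) T]
    by (auto simp: word_P)
  have C: "v j * P u S [1..<n] = P u S [1..<n] * v j \<or> v j * P u S [1..<n] = -(P u S [1..<n] * v j)"
    by (rule P_comm) (use vu_pm j in auto)
  have e: "v j * word n u v S T = (v j * P u S [1..<n]) * P v T [1..<n]"
    by (simp add: word_P mult.assoc)
  have f: "(P u S [1..<n] * v j) * P v T [1..<n] \<in> M"
    unfolding mult.assoc Pv
    using word_in[OF S T'(1)] nword_in[OF S T'(1)] word_in[OF S T'(2)]
    by (auto simp: word_P)
  from C show "v j * word n u v S T \<in> M" unfolding e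
    using f neg_in by auto
qed

lemma Lmul: assumes "j \<in> N" "m \<in> M" shows "u j * m \<in> M" "v j * m \<in> M"
proof -
  obtain S T where ST: "S \<subseteq> N" "T \<subseteq> N" "m = word n u v S T \<or> m = - word n u v S T"
    using assms(2) unfolding mem_M by blast
  show "u j * m \<in> M" using ST Lmul_word[OF assms(1) ST(1,2)] neg_in by auto
  show "v j * m \<in> M" using ST Lmul_word[OF assms(1) ST(1,2)] neg_in by auto
qed

lemma Lprod: "(\<And>y. y \<in> set ys \<Longrightarrow> \<forall>m\<in>M. y*m \<in> M) \<Longrightarrow> m \<in> M \<Longrightarrow> prod_list ys * m \<in> M"
  by (induction ys arbitrary: m) (auto simp: mult.assoc)

lemma word_list: "word n u v S T = prod_list (map (\<lambda>i. if i \<in> S then u i else 1) [1..<n] @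
    map (\<lambda>i. if i \<in> T then v i else 1) [1..<n])"
  by (simp add: word_def)

lemma Mmul: assumes a: "a \<in> M" and b: "b \<in> M" shows "a * b \<in> M"
proof -
  have W: "word n u v S T * b \<in> M" for S T
    unfolding word_list by (rule Lprod[OF _ b]) (auto intro: Lmul)
  obtain S T where ST: "S \<subseteq> N" "T \<subseteq> N" "a = word n u v S T \<or> a = - word n u v S T"
    using a unfolding mem_M by blast
  show ?thesis using ST W[of S T] neg_in by auto
qed

lemma gen_in: "j \<in> N \<Longrightarrow> u j \<in> M" "j \<in> N \<Longrightarrow> v j \<in> M"
  using Lmul[OF _ one_in] by auto

lemma central: "sc a * x = x * sc a" using calg unfolding calg_def by blast
lemma sc_pull: "x * (sc a * y) = sc a * (x * y)"
proof -
  have "x * (sc a * y) = (x * sc a) * y" by (simp only: mult.assoc)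
  also have "\<dots> = (sc a * x) * y" by (subst central) (rule refl)
  finally show ?thesis by (simp only: mult.assoc)
qed
lemma sc_mult: "sc (a*b) = sc a * sc b" using calg unfolding calg_def by blast
lemma sc2: "(sc c * A) * (sc d * B) = sc (c*d) * (A*B)"
proof -
  have "(sc c * A) * (sc d * B) = sc c * (A * (sc d * B))" by (simp only: mult.assoc)
  also have "\<dots> = sc c * (sc d * (A * B))" by (simp only: sc_pull[of A])
  also have "\<dots> = sc (c*d) * (A*B)" by (simp only: sc_mult mult.assoc)
  finally show ?thesis .
qed
lemma sc_add: "sc (a+b) = sc a + sc b" using calg unfolding calg_def by blast
lemma sc_1: "sc 1 = 1" using calg unfolding calg_def by blast
lemma sc_4: "sc 4 = 4"
proof -
  have "(4::complex) = 1+1+1+1" by simp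
  hence "sc 4 = sc 1 + sc 1 + sc 1 + sc 1" by (simp only: sc_add)
  thus ?thesis by (simp add: sc_1)
qed

lemma qq_nz: "qq \<noteq> 0" by (simp add: qq_def)

definition tgen :: "nat \<Rightarrow> 'a" where
  "tgen i = sc (- qq / 2) * (1 - u i - v i - u i * v i)"

abbreviation "s \<equiv> sgen sc u v"

lemma st: assumes i: "i \<in> N" shows "s i * tgen i = 1" "tgen i * s i = 1"
proof -
  have vu: "v i * u i = -(u i * v i)" using vu_anti[OF i i] by simp
  note Q = quat_inv[OF uu[OF i] vv[OF i] vu]
  have c: "(- 1 / (2 * qq)) * (- qq / 2) = 1/4" "(- qq / 2) * (- 1 / (2 * qq)) = 1/4"
    using qq_nz by (simp_all add: field_simps)
  have k: "sc (1/4) * 4 = 1" unfolding sc_4[symmetric] sc_mult[symmetric] by (simp add: sc_1)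
  have "s i * tgen i = sc ((- 1 / (2 * qq)) * (- qq / 2)) * ((1 + u i + v i + u i * v i) * (1 - u i - v i - u i * v i))"
    unfolding sgen_def tgen_def by (rule sc2)
  also have "\<dots> = 1" unfolding Q c k ..
  finally show "s i * tgen i = 1" .
  have "tgen i * s i = sc ((- qq / 2) * (- 1 / (2 * qq))) * ((1 - u i - v i - u i * v i) * (1 + u i + v i + u i * v i))"
    unfolding sgen_def tgen_def by (rule sc2)
  also have "\<dots> = 1" unfolding Q c k ..
  finally show "tgen i * s i = 1" .
qed

lemma s_inv: "i \<in> N \<Longrightarrow> ring_inv (s i) = tgen i"
  using st inv_unique by blast

lemma conj_gen:
  assumes i: "i \<in> N" and k: "k \<in> N" and x: "x = u k \<or> x = v k"
  shows "tgen i * x * s i \<in> M"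
proof -
  have vu: "v i * u i = -(u i * v i)" using vu_anti[OF i i] by simp
  define a where "a = 1 + u i + v i + u i * v i"
  have sa: "s i = sc (- 1 / (2 * qq)) * a" unfolding sgen_def a_def ..
  have key: "\<exists>y\<in>M. x * a = a * y"
  proof -
    have xu: "x * u i = u i * x \<or> x * u i = -(u i * x)" and xv: "x * v i = v i * x \<or> x * v i = -(v i * x)"
      using x ucomm[OF i k] vcomm[OF i k] vu_pm[OF k i] vu_pm[OF i k]
      by (auto simp: minus_equation_iff[of "v i * u k"] eq_commute[of "- _"])
    have xM: "x \<in> M" using x gen_in k by auto
    show ?thesis
    proof (cases "x * u i = u i * x")
      case T1: True
      show ?thesis
      proof (cases "x * v i = v i * x")
        case True
        have r: "x * (u i * y) = u i * (x * y)" "x * (v i * y) = v i * (x * y)" for y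
          using T1 True by (metis mult.assoc)+
        have "x * a = a * x" unfolding a_def
          by (simp only: distrib_left distrib_right mult_1_left mult_1_right mult.assoc r T1 True)
        then show ?thesis using xM by blast
      next
        case False
        hence "x * v i = -(v i * x)" using xv by auto
        from quat_A[OF uu[OF i] vv[OF i] vu T1 this]
        show ?thesis unfolding a_def[symmetric]
          using neg_in[OF Lmul(2)[OF i xM]] by blast
      qed
    next
      case F1: False
      hence x1: "x * u i = -(u i * x)" using xu by auto
      show ?thesis
      proof (cases "x * v i = v i * x")
        case True
        from quat_B[OF uu[OF i] vv[OF i] vu x1 True]
        show ?thesis unfolding a_def[symmetric]
          using neg_in[OF Lmul(1)[OF i Lmul(2)[OF i xM]]] by blast
      next
        case False
        hence x2: "x * v i = -(v i * x)" using xv by auto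
        have "x * u i = u i * x \<or> x * v i = v i * x" using x ucomm[OF i k] vcomm[OF i k] by auto
        then show ?thesis using F1 False by blast
      qed
    qed
  qed
  then obtain y where yM: "y \<in> M" and xa: "x * a = a * y" by blast
  have "x * s i = s i * y" unfolding sa
    by (simp only: sc_pull[of x] xa mult.assoc)
  hence "tgen i * x * s i = (tgen i * s i) * y" by (simp add: mult.assoc)
  thus ?thesis using st(2)[OF i] yM by simp
qed


lemma Lconj:
  assumes st1: "b * c = 1" and st2: "c * b = 1" and "\<And>y. y \<in> set ys \<Longrightarrow> c * y * b \<in> M"
  shows "c * prod_list ys * b \<in> M"
  using assms(3)
proof (induction ys)
  case Nil then show ?case using st2 one_in by simp
next
  case (Cons y ys)
  have r: "b * (c * z) = z" for z using st1 by (simp add: mult.assoc[symmetric])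
  have "c * prod_list (y#ys) * b = (c * y * b) * (c * prod_list ys * b)"
    by (simp add: mult.assoc r)
  then show ?case using Cons Mmul by auto
qed

lemma conj_M: assumes i: "i \<in> N" and m: "m \<in> M" shows "tgen i * m * s i \<in> M"
proof -
  have W: "tgen i * word n u v S T * s i \<in> M" for S T
    unfolding word_list
  proof (rule Lconj[OF st(1)[OF i] st(2)[OF i]])
    fix y assume "y \<in> set (map (\<lambda>i. if i \<in> S then u i else 1) [1..<n] @ map (\<lambda>i. if i \<in> T then v i else 1) [1..<n])"
    then obtain k where k: "k \<in> N" and y: "y = 1 \<or> y = u k \<or> y = v k" by (auto split: if_splits)
    show "tgen i * y * s i \<in> M"
      using y conj_gen[OF i k] st(2)[OF i] one_in by auto
  qed
  obtain S T where ST: "S \<subseteq> N" "T \<subseteq> N" "m = word n u v S T \<or> m = - word n u v S T"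
    using m unfolding mem_M by blast
  show ?thesis using ST W[of S T] neg_in by auto
qed

lemma conj_s_M: assumes i: "i \<in> N" shows "conj_act (s i) ` M = M"
proof -
  have e: "conj_act (s i) x = tgen i * x * s i" for x by (simp add: conj_act_def s_inv[OF i])
  show ?thesis
  proof (rule endo_inj_surj[OF finite_M])
    show "conj_act (s i) ` M \<subseteq> M" using conj_M[OF i] e by auto
    show "inj_on (conj_act (s i)) M"
    proof
      fix x y assume "conj_act (s i) x = conj_act (s i) y"
      hence "s i * (tgen i * x * s i) * tgen i = s i * (tgen i * y * s i) * tgen i" by (simp add: e)
      thus "x = y" using st[OF i] by (simp add: mult.assoc[symmetric]) (simp add: mult.assoc)
    qed
  qed
qed

lemma conj_inv_M: assumes i: "i \<in> N" and m: "m \<in> M" shows "s i * m * tgen i \<in> M"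
proof -
  obtain m' where m': "m' \<in> M" "m = conj_act (s i) m'" using conj_s_M[OF i] m by blast
  have "s i * m * tgen i = (s i * tgen i) * m' * (s i * tgen i)"
    using m' by (simp add: conj_act_def s_inv[OF i] mult.assoc)
  thus ?thesis using st(1)[OF i] m' by simp
qed

lemma Ggrp_prop: "g \<in> Ggrp n s \<Longrightarrow> g * ring_inv g = 1 \<and> ring_inv g * g = 1 \<and> (\<forall>m\<in>M. conj_act g m \<in> M)"
proof (induction rule: Ggrp.induct)
  case one
  have "ring_inv (1::'a) = 1" by (rule inv_unique) simp_all
  then show ?case by (simp add: conj_act_def)
next
  case (mul g i)
  have inv: "ring_inv (g * s i) = tgen i * ring_inv g"
    apply (rule inv_unique)
    using mul st[OF mul(2)] by (simp_all add: mult.assoc) (simp_all add: mult.assoc[symmetric])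
  have c: "conj_act (g * s i) m = tgen i * (conj_act g m) * s i" for m
    unfolding conj_act_def inv by (simp add: mult.assoc)
  have "g * s i * ring_inv (g * s i) = 1" "ring_inv (g * s i) * (g * s i) = 1"
    unfolding inv using mul st[OF mul(2)]
    by (simp_all add: mult.assoc) (simp_all add: mult.assoc[symmetric])
  then show ?case using c mul conj_M[OF mul(2)] by auto
next
  case (mulinv g i)
  have inv: "ring_inv (g * ring_inv (s i)) = s i * ring_inv g"
    apply (rule inv_unique)
    using mulinv st[OF mulinv(2)] s_inv[OF mulinv(2)] by (simp_all add: mult.assoc) (simp_all add: mult.assoc[symmetric])
  have c: "conj_act (g * ring_inv (s i)) m = s i * (conj_act g m) * tgen i" for m
    unfolding conj_act_def inv unfolding s_inv[OF mulinv(2)] by (simp add: mult.assoc)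
  have "g * ring_inv (s i) * ring_inv (g * ring_inv (s i)) = 1" "ring_inv (g * ring_inv (s i)) * (g * ring_inv (s i)) = 1"
    unfolding inv unfolding s_inv[OF mulinv(2)] using mulinv st[OF mulinv(2)]
    by (simp_all add: mult.assoc) (simp_all add: mult.assoc[symmetric])
  then show ?case using c mulinv conj_inv_M[OF mulinv(2)] by auto
qed


lemma conj_sum: "conj_act g (sum f A) = (\<Sum>p\<in>A. conj_act g (f p))"
  unfolding conj_act_def by (simp add: sum_distrib_left sum_distrib_right)

lemma conj_sc: "conj_act g (sc a * w) = sc a * conj_act g w"
  unfolding conj_act_def by (simp only: mult.assoc sc_pull[of "ring_inv g"])

lemma ext_M:
  assumes span: "\<forall>x. \<exists>c. x = (\<Sum>(S,T)\<in>word_idx n. sc (c (S,T)) * word n u v S T)"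
    and agree: "\<forall>m\<in>M. conj_act g m = conj_act h m"
  shows "conj_act g = conj_act h"
proof
  fix x
  obtain c where x: "x = (\<Sum>(S,T)\<in>word_idx n. sc (c (S,T)) * word n u v S T)" using span by blast
  have "conj_act g x = (\<Sum>p\<in>word_idx n. conj_act g ((\<lambda>(S,T). sc (c (S,T)) * word n u v S T) p))"
    unfolding x by (rule conj_sum)
  also have "\<dots> = (\<Sum>p\<in>word_idx n. conj_act h ((\<lambda>(S,T). sc (c (S,T)) * word n u v S T) p))"
  proof (rule sum.cong[OF refl])
    fix p assume p: "p \<in> word_idx n"
    obtain S T where pST: "p = (S,T)" by (cases p)
    have ST: "S \<subseteq> N" "T \<subseteq> N" using p pST by (auto simp: word_idx_def)
    show "conj_act g ((\<lambda>(S,T). sc (c (S,T)) * word n u v S T) p) = conj_act h ((\<lambda>(S,T). sc (c (S,T)) * word n u v S T) p)"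
      unfolding pST using agree word_in[OF ST] by (simp add: conj_sc)
  qed
  also have "\<dots> = conj_act h x"
    unfolding x by (rule conj_sum[symmetric])
  finally show "conj_act g x = conj_act h x" .
qed

lemma finite_img:
  assumes span: "\<forall>x. \<exists>c. x = (\<Sum>(S,T)\<in>word_idx n. sc (c (S,T)) * word n u v S T)"
  shows "finite (conj_act ` Ggrp n s)"
proof -
  define gr where "gr = (\<lambda>\<phi>::'a\<Rightarrow>'a. (\<lambda>m. (m, \<phi> m)) ` M)"
  have sub: "gr ` (conj_act ` Ggrp n s) \<subseteq> Pow (M \<times> M)"
    using Ggrp_prop unfolding gr_def by fastforce
  have fin: "finite (gr ` (conj_act ` Ggrp n s))"
    by (rule finite_subset[OF sub]) (simp add: finite_M)
  have inj: "inj_on gr (conj_act ` Ggrp n s)"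
  proof
    fix a b assume a: "a \<in> conj_act ` Ggrp n s" and b: "b \<in> conj_act ` Ggrp n s" and e: "gr a = gr b"
    obtain g h where a': "a = conj_act g" and b': "b = conj_act h" using a b by blast
    have "\<forall>m\<in>M. a m = b m"
    proof
      fix m assume "m \<in> M"
      hence "(m, a m) \<in> gr b" using e unfolding gr_def by auto
      thus "a m = b m" unfolding gr_def by auto
    qed
    thus "a = b" using ext_M[OF span] a' b' by simp
  qed
  show ?thesis using finite_imageD[OF fin inj] .
qed

lemma kernel: "g \<in> Ggrp n s \<Longrightarrow> conj_act g = id \<Longrightarrow> g * x = x * g"
proof -
  assume g: "g \<in> Ggrp n s" and k: "conj_act g = id"
  have "ring_inv g * x * g = x" using fun_cong[OF k, of x] by (simp add: conj_act_def)
  hence "g * (ring_inv g * x * g) = g * x" by simp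
  thus "g * x = x * g" using Ggrp_prop[OF g] by (simp add: mult.assoc[symmetric])
qed

end

theorem mainTheorem7:
  fixes n :: nat and sc :: "complex \<Rightarrow> 'a::ring_1" and u v :: "nat \<Rightarrow> 'a"
  assumes "n \<ge> 2" and "is_Q n sc u v"
  shows "(\<forall>i\<in>{1..<n}. conj_act (sgen sc u v i) ` signed_words n u v = signed_words n u v)
     \<and> finite (conj_act ` Ggrp n (sgen sc u v))
     \<and> {g \<in> Ggrp n (sgen sc u v). conj_act g = id} \<subseteq> {z. \<forall>x. z * x = x * z}"
proof -
  interpret Qloc n sc u v using assms(2) unfolding is_Q_def by unfold_locales auto
  have span: "\<forall>x. \<exists>c. x = (\<Sum>(S,T)\<in>word_idx n. sc (c (S,T)) * word n u v S T)"
    using assms(2) unfolding is_Q_def words_basis_def by blast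
  show ?thesis using conj_s_M finite_img[OF span] kernel by blast
qed

end
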